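(* Let $A\subseteq\mathbb R^{d_x}$ be any measurable set, $W\sim N(0,I_{d_x})$ and $\bar W=W\mathbf 1\{W\in A\}$, and suppose $\mathbf P(W\notin A)\le1/12$. Then $\frac12I\preccurlyeq\mathbb{E}[\bar W\bar W^\top]\preccurlyeq I$.
   Context: $\preccurlyeq$ denotes the Loewner (positive semidefinite) order. *)

theory Defs
  imports "HOL-Probability.Probability"
begin

definition std_gauss_vec_density :: "real ^ 'n \<Rightarrow> real" where
  "std_gauss_vec_density x = (\<Prod>i\<in>UNIV. std_normal_density (x $ i))"

definition psd :: "real ^ 'n ^ 'n \<Rightarrow> bool" where
  "psd M \<longleftrightarrow> transpose M = M \<and> (\<forall>v. 0 \<le> v \<bullet> (M *v v))"

definition loewner_le :: "real ^ 'n ^ 'n \<Rightarrow> real ^ 'n ^ 'n \<Rightarrow> bool" where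
  "loewner_le M N \<longleftrightarrow> psd (N - M)"

end

theory Submission
  imports Defs
begin



lemma prod_Basis_vec:
  "(\<Prod>b\<in>(Basis::(real^'n) set). f (x \<bullet> b)) = (\<Prod>i\<in>UNIV. f (x $ i))"
proof -
  have B: "(Basis::(real^'n) set) = range (\<lambda>i. axis i 1)"
    by (auto simp: Basis_vec_def)
  have "inj (\<lambda>i::'n. axis i (1::real))"
    by (auto simp: inj_def axis_eq_axis)
  then show ?thesis unfolding B
    by (subst prod.reindex) (auto simp: inner_axis)
qed

lemma gauss_vec_density_Basis:
  "std_gauss_vec_density (x::real^'n) = (\<Prod>b\<in>Basis. std_normal_density (x \<bullet> b))"
  unfolding std_gauss_vec_density_def by (rule prod_Basis_vec[symmetric])




lemma density_PiM_normal:
  "density (PiM (Basis::(real^'n) set) (\<lambda>_. lborel)) (\<lambda>f. ennreal (\<Prod>b\<in>Basis. std_normal_density (f b)))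
   = PiM Basis (\<lambda>_. density lborel (\<lambda>x. ennreal (std_normal_density x)))"
  (is "?L = PiM Basis (\<lambda>_. ?N)")
proof -
  interpret N: prob_space ?N using real_dist_normal_dist by (simp add: real_distribution_def)
  interpret PN: product_prob_space "\<lambda>_::real^'n. ?N" by unfold_locales
  interpret PL: product_sigma_finite "\<lambda>_::real^'n. lborel :: real measure" by unfold_locales
  show ?thesis
  proof (rule PN.PiM_eqI)
    show "finite (Basis::(real^'n) set)" by simp
    have "sets ?L = sets (PiM (Basis::(real^'n) set) (\<lambda>_. lborel :: real measure))"
      by (rule sets_density)
    also have "\<dots> = sets (PiM Basis (\<lambda>_. ?N))"
      by (rule sets_PiM_cong) auto
    finally show "sets ?L = sets (PiM Basis (\<lambda>_. ?N))" .
    fix A assume A: "\<And>i. i \<in> (Basis::(real^'n) set) \<Longrightarrow> A i \<in> sets ?N"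
    have AS: "PiE Basis A \<in> sets (PiM (Basis::(real^'n) set) (\<lambda>_. lborel))"
      using A by (intro sets_PiM_I_finite) auto
    have meas: "(\<lambda>f. ennreal (\<Prod>b\<in>Basis. std_normal_density (f b))) \<in> borel_measurable (PiM (Basis::(real^'n) set) (\<lambda>_. lborel))"
      by measurable
    have "emeasure ?L (PiE Basis A) = (\<integral>\<^sup>+f. ennreal (\<Prod>b\<in>Basis. std_normal_density (f b)) * indicator (PiE Basis A) f \<partial>PiM Basis (\<lambda>_. lborel))"
      by (rule emeasure_density[OF meas AS])
    also have "\<dots> = (\<integral>\<^sup>+f. (\<Prod>b\<in>Basis. ennreal (std_normal_density (f b)) * indicator (A b) (f b)) \<partial>PiM Basis (\<lambda>_. lborel))"
    proof (intro nn_integral_cong)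
      fix f assume f: "f \<in> space (PiM (Basis::(real^'n) set) (\<lambda>_. lborel :: real measure))"
      have "indicator (PiE Basis A) f = (\<Prod>b\<in>Basis. indicator (A b) (f b) :: ennreal)"
        using f by (auto simp: space_PiM PiE_iff indicator_def)
      then show "ennreal (\<Prod>b\<in>Basis. std_normal_density (f b)) * indicator (PiE Basis A) f = (\<Prod>b\<in>Basis. ennreal (std_normal_density (f b)) * indicator (A b) (f b))"
        by (simp add: prod.distrib prod_ennreal)
    qed
    also have "\<dots> = (\<Prod>b\<in>Basis. \<integral>\<^sup>+x. ennreal (std_normal_density x) * indicator (A b) x \<partial>lborel)"
      using A by (intro PL.product_nn_integral_prod) auto
    also have "\<dots> = (\<Prod>b\<in>Basis. emeasure ?N (A b))"
      using A by (intro prod.cong refl) (simp add: emeasure_density)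
    finally show "emeasure ?L (PiE Basis A) = (\<Prod>b\<in>Basis. emeasure ?N (A b))" .
  qed
qed



abbreviation "NN \<equiv> density lborel (\<lambda>x. ennreal (std_normal_density x))"

lemma inner_sum_Basis_fun: "b \<in> Basis \<Longrightarrow> (\<Sum>c\<in>Basis. f c *\<^sub>R c) \<bullet> (b::'a::euclidean_space) = f b"
  by (simp add: inner_sum_left inner_Basis if_distrib sum.delta cong: if_cong)

lemma lborel_gauss_vec:
  "density lborel (\<lambda>x::real^'n. ennreal (std_gauss_vec_density x))
   = distr (PiM Basis (\<lambda>_. NN)) borel (\<lambda>f. \<Sum>b\<in>Basis. f b *\<^sub>R b)"
proof -
  let ?P0 = "PiM (Basis::(real^'n) set) (\<lambda>_. lborel :: real measure)"
  let ?T = "\<lambda>f. \<Sum>b\<in>(Basis::(real^'n) set). f b *\<^sub>R b"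
  let ?g = "\<lambda>x::real^'n. ennreal (std_gauss_vec_density x)"
  have gm: "?g \<in> borel_measurable borel"
    unfolding std_gauss_vec_density_def by measurable
  have Tm: "?T \<in> measurable ?P0 borel" by measurable
  have "density lborel ?g = density (distr ?P0 borel ?T) ?g"
    using lborel_eq[where 'a="real^'n"] by simp
  also have "\<dots> = distr (density ?P0 (\<lambda>f. ?g (?T f))) borel ?T"
    by (rule density_distr[OF gm Tm])
  also have "density ?P0 (\<lambda>f. ?g (?T f)) = density ?P0 (\<lambda>f. ennreal (\<Prod>b\<in>Basis. std_normal_density (f b)))"
  proof (rule density_cong)
    show "(\<lambda>f. ?g (?T f)) \<in> borel_measurable ?P0" using gm Tm by measurable
    show "(\<lambda>f. ennreal (\<Prod>b\<in>Basis. std_normal_density (f b))) \<in> borel_measurable ?P0" by measurable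
    show "AE f in ?P0. ?g (?T f) = ennreal (\<Prod>b\<in>Basis. std_normal_density (f b))"
      by (rule AE_I2) (simp add: gauss_vec_density_Basis inner_sum_Basis_fun)
  qed
  also have "\<dots> = PiM Basis (\<lambda>_. NN)"
    by (rule density_PiM_normal)
  finally show ?thesis .
qed

lemma gauss_vec_components:
  fixes W :: "'s \<Rightarrow> real^'n"
  assumes P: "prob_space M"
    and D: "distributed M lborel W (\<lambda>x. ennreal (std_gauss_vec_density x))"
  shows "prob_space.indep_vars M (\<lambda>_. borel) (\<lambda>b \<omega>. W \<omega> \<bullet> b) Basis"
    and "\<And>b. b \<in> Basis \<Longrightarrow> distributed M lborel (\<lambda>\<omega>. W \<omega> \<bullet> b) (\<lambda>x. ennreal (std_normal_density x))"
proof -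
  interpret prob_space M by (rule P)
  interpret N: prob_space NN using real_dist_normal_dist by (simp add: real_distribution_def)
  have Nprob: "prob_space NN" by unfold_locales
  let ?T = "\<lambda>f. \<Sum>b\<in>(Basis::(real^'n) set). f b *\<^sub>R b"
  let ?U = "\<lambda>x::real^'n. \<lambda>b\<in>(Basis::(real^'n) set). x \<bullet> b"
  let ?PN = "PiM (Basis::(real^'n) set) (\<lambda>_. NN)"
  let ?PB = "PiM (Basis::(real^'n) set) (\<lambda>_. borel :: real measure)"
  have Wm: "W \<in> measurable M lborel" and DD: "distr M lborel W = density lborel (\<lambda>x. ennreal (std_gauss_vec_density x))"
    using D by (auto simp: distributed_def)
  have Wm': "W \<in> borel_measurable M" using Wm by simp
  have Um: "?U \<in> measurable lborel ?PB" by measurable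
  have Tm: "?T \<in> measurable ?PN borel" by measurable
  have setsPN: "sets ?PN = sets ?PB" by (rule sets_PiM_cong) auto
  have key: "distr M ?PB (\<lambda>\<omega>. ?U (W \<omega>)) = ?PN"
  proof -
    have "distr M ?PB (\<lambda>\<omega>. ?U (W \<omega>)) = distr (distr M lborel W) ?PB ?U"
      by (subst distr_distr[OF Um Wm]) (simp add: comp_def)
    also have "\<dots> = distr (distr ?PN borel ?T) ?PB ?U"
      by (simp add: DD lborel_gauss_vec)
    also have "\<dots> = distr ?PN ?PB (?U \<circ> ?T)"
      by (rule distr_distr) (use Um Tm in simp_all)
    also have "\<dots> = distr ?PN ?PB (\<lambda>f. f)"
    proof (rule distr_cong)
      fix f assume "f \<in> space ?PN"
      then show "(?U \<circ> ?T) f = f"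
        by (auto simp: space_PiM PiE_def extensional_def inner_sum_Basis_fun fun_eq_iff)
    qed simp_all
    also have "\<dots> = ?PN" by (rule distr_id2) (rule setsPN[symmetric])
    finally show ?thesis .
  qed
  have marg: "distr M lborel (\<lambda>\<omega>. W \<omega> \<bullet> b) = NN" if b: "b \<in> Basis" for b
  proof -
    have pm: "(\<lambda>f. f b) \<in> measurable ?PB lborel" using b by measurable
    have "distr M lborel (\<lambda>\<omega>. W \<omega> \<bullet> b) = distr (distr M ?PB (\<lambda>\<omega>. ?U (W \<omega>))) lborel (\<lambda>f. f b)"
      using b by (subst distr_distr[OF pm]) (use Wm' Um in \<open>auto simp: comp_def\<close>)
    also have "\<dots> = distr ?PN NN (\<lambda>f. f b)"
      unfolding key by (rule distr_cong) auto
    also have "\<dots> = NN"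
      by (rule distr_PiM_component) (use Nprob b in auto)
    finally show ?thesis .
  qed
  show "\<And>b. b \<in> Basis \<Longrightarrow> distributed M lborel (\<lambda>\<omega>. W \<omega> \<bullet> b) (\<lambda>x. ennreal (std_normal_density x))"
    unfolding distributed_def using marg Wm' by auto
  have "indep_vars (\<lambda>_. borel) (\<lambda>b \<omega>. W \<omega> \<bullet> b) Basis \<longleftrightarrow>
    distr M (\<Pi>\<^sub>M b\<in>Basis. borel) (\<lambda>\<omega>. \<lambda>b\<in>Basis. W \<omega> \<bullet> b) = (\<Pi>\<^sub>M b\<in>Basis. distr M borel (\<lambda>\<omega>. W \<omega> \<bullet> b))"
    by (rule indep_vars_iff_distr_eq_PiM) (use Wm' in auto)
  moreover have "(\<Pi>\<^sub>M b\<in>Basis. distr M borel (\<lambda>\<omega>. W \<omega> \<bullet> b)) = ?PN"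
  proof (rule PiM_cong)
    fix b :: "real^'n" assume b: "b \<in> Basis"
    have "distr M borel (\<lambda>\<omega>. W \<omega> \<bullet> b) = distr M lborel (\<lambda>\<omega>. W \<omega> \<bullet> b)"
      by (rule distr_cong) auto
    then show "distr M borel (\<lambda>\<omega>. W \<omega> \<bullet> b) = NN" using marg[OF b] by simp
  qed simp
  ultimately show "indep_vars (\<lambda>_. borel) (\<lambda>b \<omega>. W \<omega> \<bullet> b) Basis"
    using key by simp
qed




lemma gauss_proj_normal:
  fixes W :: "'s \<Rightarrow> real^'n" and v :: "real^'n"
  assumes P: "prob_space M"
    and D: "distributed M lborel W (\<lambda>x. ennreal (std_gauss_vec_density x))"
    and v: "v \<noteq> 0"
  shows "distributed M lborel (\<lambda>\<omega>. v \<bullet> W \<omega>) (\<lambda>x. ennreal (normal_density 0 (norm v) x))"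
proof -
  interpret prob_space M by (rule P)
  note comp = gauss_vec_components[OF P D]
  define I where "I = {b\<in>(Basis::(real^'n) set). v \<bullet> b \<noteq> 0}"
  have I: "finite I" "I \<subseteq> Basis" unfolding I_def by auto
  have Ine: "I \<noteq> {}" using v euclidean_all_zero_iff[of v] unfolding I_def by auto
  have ind: "indep_vars (\<lambda>_. borel) (\<lambda>b \<omega>. (v \<bullet> b) * (W \<omega> \<bullet> b)) I"
    by (rule indep_vars_subset[OF indep_vars_compose2[OF comp(1)] I(2)]) auto
  have nd: "distributed M lborel (\<lambda>\<omega>. (v \<bullet> b) * (W \<omega> \<bullet> b)) (normal_density 0 \<bar>v \<bullet> b\<bar>)"
    if b: "b \<in> I" for b
  proof -
    have "v \<bullet> b \<noteq> 0" "b \<in> Basis" using b unfolding I_def by auto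
    from normal_density_affine[OF comp(2)[OF \<open>b \<in> Basis\<close>] _ this(1), of 0]
    show ?thesis by simp
  qed
  have S: "distributed M lborel (\<lambda>\<omega>. \<Sum>b\<in>I. (v \<bullet> b) * (W \<omega> \<bullet> b))
      (normal_density (\<Sum>b\<in>I. 0) (sqrt (\<Sum>b\<in>I. (\<bar>v \<bullet> b\<bar>)\<^sup>2)))"
    by (rule sum_indep_normal[OF I(1) Ine ind _ nd]) (auto simp: I_def)
  have e1: "(\<Sum>b\<in>I. (v \<bullet> b) * (W \<omega> \<bullet> b)) = v \<bullet> W \<omega>" for \<omega>
  proof -
    have "(\<Sum>b\<in>I. (v \<bullet> b) * (W \<omega> \<bullet> b)) = (\<Sum>b\<in>Basis. (v \<bullet> b) * (W \<omega> \<bullet> b))"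
      by (rule sum.mono_neutral_left) (auto simp: I_def)
    then show ?thesis using euclidean_inner[of v "W \<omega>"] by simp
  qed
  have e2: "sqrt (\<Sum>b\<in>I. (v \<bullet> b)\<^sup>2) = norm v"
  proof -
    have "(\<Sum>b\<in>I. (v \<bullet> b)\<^sup>2) = (\<Sum>b\<in>Basis. (v \<bullet> b)\<^sup>2)"
      by (rule sum.mono_neutral_left) (auto simp: I_def)
    also have "\<dots> = (\<Sum>b\<in>Basis. (v \<bullet> b) * (v \<bullet> b))"
      by (simp add: power2_eq_square)
    finally have "(\<Sum>b\<in>I. (v \<bullet> b)\<^sup>2) = (\<Sum>b\<in>Basis. (v \<bullet> b) * (v \<bullet> b))" .
    then show ?thesis using euclidean_inner[of v v] by (simp add: norm_eq_sqrt_inner)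
  qed
  show ?thesis using S by (simp add: e1 e2)
qed

lemma gauss_proj_moments:
  fixes W :: "'s \<Rightarrow> real^'n" and v :: "real^'n"
  assumes P: "prob_space M"
    and D: "distributed M lborel W (\<lambda>x. ennreal (std_gauss_vec_density x))"
  shows "integrable M (\<lambda>\<omega>. (v \<bullet> W \<omega>)^2)" "(\<integral>\<omega>. (v \<bullet> W \<omega>)^2 \<partial>M) = (norm v)^2"
    "integrable M (\<lambda>\<omega>. (v \<bullet> W \<omega>)^4)" "(\<integral>\<omega>. (v \<bullet> W \<omega>)^4 \<partial>M) = 3 * (norm v)^4"
proof -
  interpret prob_space M by (rule P)
  have gen: "integrable M (\<lambda>\<omega>. (v \<bullet> W \<omega>)^(2*k)) \<and> (\<integral>\<omega>. (v \<bullet> W \<omega>)^(2*k) \<partial>M) = fact (2 * k) / ((2 / (norm v)\<^sup>2)^k * fact k)" if k: "k > 0" for k :: nat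
  proof (cases "v = 0")
    case True then show ?thesis using k by (simp add: power_0_left)
  next
    case False
    have s: "0 < norm v" using False by simp
    note Z = gauss_proj_normal[OF P D False]
    have "integrable lborel (\<lambda>x. normal_density 0 (norm v) x * x^(2*k))"
      using integrable_normal_moment[OF s, of 0 "2*k"] by simp
    then have i: "integrable M (\<lambda>\<omega>. (v \<bullet> W \<omega>)^(2*k))"
      using distributed_integrable[OF Z, of "\<lambda>x. x^(2*k)"] by simp
    have "(\<integral>\<omega>. (v \<bullet> W \<omega>)^(2*k) \<partial>M) = (\<integral>x. normal_density 0 (norm v) x * x^(2*k) \<partial>lborel)"
      using distributed_integral[OF Z, of "\<lambda>x. x^(2*k)"] by simp
    also have "\<dots> = fact (2 * k) / ((2 / (norm v)\<^sup>2)^k * fact k)"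
      using integral_normal_moment_even[OF s, of 0 k] by simp
    finally show ?thesis using i by simp
  qed
  have c1: "fact (2 * 1) / ((2 / (norm v)\<^sup>2)^1 * fact 1) = (norm v)^2"
    by (cases "v = 0") (simp_all add: fact_numeral)
  have c2: "fact (2 * 2) / ((2 / (norm v)\<^sup>2)^2 * fact 2) = 3 * (norm v)^4"
    by (cases "v = 0") (simp_all add: fact_numeral power_divide field_simps)
  from gen[of 1] gen[of 2] c1 c2 show "integrable M (\<lambda>\<omega>. (v \<bullet> W \<omega>)^2)" "(\<integral>\<omega>. (v \<bullet> W \<omega>)^2 \<partial>M) = (norm v)^2"
    "integrable M (\<lambda>\<omega>. (v \<bullet> W \<omega>)^4)" "(\<integral>\<omega>. (v \<bullet> W \<omega>)^4 \<partial>M) = 3 * (norm v)^4"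
    by simp_all
qed




lemma loewner_leI:
  fixes P Q :: "real^'n^'n"
  assumes "transpose P = P" "transpose Q = Q" "\<And>v. v \<bullet> (Q *v v) \<le> v \<bullet> (P *v v)"
  shows "loewner_le Q P"
proof -
  have "transpose (P - Q) = transpose P - transpose Q"
    by (simp add: transpose_def vec_eq_iff)
  moreover have "v \<bullet> ((P - Q) *v v) = v \<bullet> (P *v v) - v \<bullet> (Q *v v)" for v
    by (simp add: matrix_vector_mult_diff_rdistrib inner_diff_right)
  ultimately show ?thesis using assms unfolding loewner_le_def psd_def by simp
qed

lemma transpose_half_id: "transpose ((1/2::real) *\<^sub>R (mat 1 :: real^'n^'n)) = (1/2::real) *\<^sub>R mat 1"
  by (simp add: transpose_def vec_eq_iff mat_def)

lemma half_id_mult: "((1/2::real) *\<^sub>R (mat 1 :: real^'n^'n)) *v v = (1/2::real) *\<^sub>R v"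
  by (simp add: scaleR_matrix_vector_assoc[symmetric])

lemma quad_aux: fixes x t :: real assumes t: "t > 0" shows "x - 3 * t - x^2 / (12 * t) \<le> 0"
proof -
  have "0 \<le> (x - 6 * t)^2 / (12 * t)" using t by simp
  also have "(x - 6 * t)^2 / (12 * t) = x^2 / (12 * t) - x + 3 * t"
    using t by (simp add: field_simps power2_eq_square)
  finally show ?thesis by linarith
qed

lemma abs_prod_le_sq: fixes a b :: real shows "\<bar>a * b\<bar> \<le> a^2 + b^2"
proof -
  have h: "2 * (\<bar>a\<bar> * \<bar>b\<bar>) \<le> a^2 + b^2"
    using sum_squares_bound[of "\<bar>a\<bar>" "\<bar>b\<bar>"] by (simp add: mult.assoc)
  have "0 \<le> \<bar>a\<bar> * \<bar>b\<bar>" by simp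
  then show ?thesis using h unfolding abs_mult by linarith
qed

theorem proposition14:
  fixes M :: "'s measure" and W :: "'s \<Rightarrow> real ^ 'n" and A :: "(real ^ 'n) set"
  assumes "prob_space M"
    and "A \<in> sets borel"
    and "distributed M lborel W (\<lambda>x. ennreal (std_gauss_vec_density x))"
    and "prob_space.prob M {\<omega> \<in> space M. W \<omega> \<notin> A} \<le> 1/12"
  shows "let Wb = (\<lambda>\<omega>. if W \<omega> \<in> A then W \<omega> else 0);
             S = (\<chi> i j. prob_space.expectation M (\<lambda>\<omega>. Wb \<omega> $ i * Wb \<omega> $ j))
         in loewner_le ((1/2 :: real) *\<^sub>R mat 1) S \<and> loewner_le S (mat 1)"
proof -
  interpret prob_space M by fact
  note P = \<open>prob_space M\<close> and D = \<open>distributed M lborel W (\<lambda>x. ennreal (std_gauss_vec_density x))\<close>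
  have Wm[measurable]: "W \<in> borel_measurable M"
    using D by (simp add: distributed_def)
  have Am[measurable]: "A \<in> sets borel" by fact
  define Wb where "Wb = (\<lambda>\<omega>. if W \<omega> \<in> A then W \<omega> else 0)"
  have predA[measurable]: "Measurable.pred M (\<lambda>\<omega>. W \<omega> \<in> A)"
    by (rule pred_sets2[OF Am Wm])
  have Wi[measurable]: "(\<lambda>\<omega>. W \<omega> $ i) \<in> borel_measurable M" for i
  proof -
    have "(\<lambda>\<omega>. W \<omega> \<bullet> axis i 1) \<in> borel_measurable M" by measurable
    then show ?thesis by (simp add: inner_axis)
  qed
  have Wb_comp: "Wb \<omega> $ i = (if W \<omega> \<in> A then W \<omega> $ i else 0)" for \<omega> i
    by (simp add: Wb_def)
  define S where "S = (\<chi> i j. expectation (\<lambda>\<omega>. Wb \<omega> $ i * Wb \<omega> $ j))"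
  note mom = gauss_proj_moments[OF P D]
  have int_ij: "integrable M (\<lambda>\<omega>. Wb \<omega> $ i * Wb \<omega> $ j)" for i j
  proof (rule Bochner_Integration.integrable_bound)
    show "integrable M (\<lambda>\<omega>. (axis i 1 \<bullet> W \<omega>)^2 + (axis j 1 \<bullet> W \<omega>)^2)"
      using mom(1)[of "axis i 1"] mom(1)[of "axis j 1"] by (rule Bochner_Integration.integrable_add)
    show "(\<lambda>\<omega>. Wb \<omega> $ i * Wb \<omega> $ j) \<in> borel_measurable M"
      unfolding Wb_comp by measurable
    show "AE \<omega> in M. norm (Wb \<omega> $ i * Wb \<omega> $ j) \<le> norm ((axis i 1 \<bullet> W \<omega>)^2 + (axis j 1 \<bullet> W \<omega>)^2)"
    proof (rule AE_I2)
      fix \<omega>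
      have "\<bar>W \<omega> $ i * W \<omega> $ j\<bar> \<le> (W \<omega> $ i)^2 + (W \<omega> $ j)^2"
        by (rule abs_prod_le_sq)
      then show "norm (Wb \<omega> $ i * Wb \<omega> $ j) \<le> norm ((axis i 1 \<bullet> W \<omega>)^2 + (axis j 1 \<bullet> W \<omega>)^2)"
        by (simp add: Wb_def inner_axis')
    qed
  qed
  have quad: "v \<bullet> (S *v v) = (\<integral>\<omega>. (if W \<omega> \<in> A then (v \<bullet> W \<omega>)^2 else 0) \<partial>M)" for v
  proof -
    have "v \<bullet> (S *v v) = (\<Sum>i\<in>UNIV. \<Sum>j\<in>UNIV. v $ i * v $ j * S $ i $ j)"
    proof -
      have "v \<bullet> (S *v v) = (\<Sum>i\<in>UNIV. v $ i * (\<Sum>j\<in>UNIV. S $ i $ j * v $ j))"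
        by (simp add: inner_vec_def matrix_vector_mult_def)
      also have "\<dots> = (\<Sum>i\<in>UNIV. \<Sum>j\<in>UNIV. v $ i * (S $ i $ j * v $ j))"
        by (simp add: sum_distrib_left)
      also have "\<dots> = (\<Sum>i\<in>UNIV. \<Sum>j\<in>UNIV. v $ i * v $ j * S $ i $ j)"
        by (intro sum.cong refl) (simp add: mult_ac)
      finally show ?thesis .
    qed
    also have "\<dots> = (\<Sum>i\<in>UNIV. \<Sum>j\<in>UNIV. (\<integral>\<omega>. v $ i * v $ j * (Wb \<omega> $ i * Wb \<omega> $ j) \<partial>M))"
      by (simp add: S_def)
    also have "\<dots> = (\<integral>\<omega>. (\<Sum>i\<in>UNIV. \<Sum>j\<in>UNIV. v $ i * v $ j * (Wb \<omega> $ i * Wb \<omega> $ j)) \<partial>M)"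
      using int_ij by (simp add: Bochner_Integration.integral_sum Bochner_Integration.integrable_sum)
    also have "\<dots> = (\<integral>\<omega>. (if W \<omega> \<in> A then (v \<bullet> W \<omega>)^2 else 0) \<partial>M)"
    proof (rule Bochner_Integration.integral_cong[OF refl])
      fix \<omega>
      have "(\<Sum>i\<in>UNIV. \<Sum>j\<in>UNIV. v $ i * v $ j * (Wb \<omega> $ i * Wb \<omega> $ j)) = (v \<bullet> Wb \<omega>)^2"
      proof -
        have "(v \<bullet> Wb \<omega>)^2 = (\<Sum>i\<in>UNIV. v $ i * Wb \<omega> $ i) * (\<Sum>j\<in>UNIV. v $ j * Wb \<omega> $ j)"
          by (simp add: inner_vec_def power2_eq_square)
        also have "\<dots> = (\<Sum>i\<in>UNIV. \<Sum>j\<in>UNIV. (v $ i * Wb \<omega> $ i) * (v $ j * Wb \<omega> $ j))"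
          by (rule sum_product)
        also have "\<dots> = (\<Sum>i\<in>UNIV. \<Sum>j\<in>UNIV. v $ i * v $ j * (Wb \<omega> $ i * Wb \<omega> $ j))"
          by (intro sum.cong refl) (simp add: mult_ac)
        finally show ?thesis by simp
      qed
      then show "(\<Sum>i\<in>UNIV. \<Sum>j\<in>UNIV. v $ i * v $ j * (Wb \<omega> $ i * Wb \<omega> $ j)) = (if W \<omega> \<in> A then (v \<bullet> W \<omega>)^2 else 0)"
        by (simp add: Wb_def)
    qed
    finally show ?thesis .
  qed
  have symS: "transpose S = S"
    by (simp add: S_def transpose_def vec_eq_iff mult.commute)
  have intA: "integrable M (\<lambda>\<omega>. if W \<omega> \<in> A then (v \<bullet> W \<omega>)^2 else 0)" for v :: "real^'n"
  proof (rule Bochner_Integration.integrable_bound[OF mom(1)[of v]])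
    show "(\<lambda>\<omega>. if W \<omega> \<in> A then (v \<bullet> W \<omega>)^2 else 0) \<in> borel_measurable M" by measurable
    show "AE \<omega> in M. norm (if W \<omega> \<in> A then (v \<bullet> W \<omega>)^2 else 0) \<le> norm ((v \<bullet> W \<omega>)^2)"
      by (rule AE_I2) auto
  qed
  have upper: "v \<bullet> (S *v v) \<le> v \<bullet> (mat 1 *v v)" for v :: "real^'n"
  proof -
    have "v \<bullet> (S *v v) \<le> (\<integral>\<omega>. (v \<bullet> W \<omega>)^2 \<partial>M)"
      unfolding quad by (rule integral_mono[OF intA mom(1)]) auto
    also have "\<dots> = v \<bullet> v" using mom(2)[of v] by (simp add: power2_norm_eq_inner)
    finally show ?thesis by simp
  qed
  have lower: "v \<bullet> (((1/2::real) *\<^sub>R mat 1) *v v) \<le> v \<bullet> (S *v v)" for v :: "real^'n"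
  proof (cases "v = 0")
    case True then show ?thesis by simp
  next
    case False
    define s where "s = (norm v)^2"
    have s: "s > 0" using False by (simp add: s_def)
    define C where "C = {\<omega> \<in> space M. W \<omega> \<notin> A}"
    have Cm: "C \<in> sets M" unfolding C_def by measurable
    have pC: "measure M C \<le> 1/12" using assms(4) by (simp add: C_def)
    have intC: "integrable M (indicator C :: 's \<Rightarrow> real)"
      using Cm by (intro integrable_real_indicator) (auto simp: emeasure_eq_measure)
    let ?f = "\<lambda>\<omega>. (v \<bullet> W \<omega>)^2 - 3 * s * indicator C \<omega> - (v \<bullet> W \<omega>)^4 / (12 * s)"
    have intf: "integrable M ?f"
      using mom(1)[of v] mom(3)[of v] intC
      by (intro Bochner_Integration.integrable_diff Bochner_Integration.integrable_divide integrable_mult_right)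
         auto
    have "(\<integral>\<omega>. ?f \<omega> \<partial>M) = s - 3 * s * measure M C - 3 * s^2 / (12 * s)"
      using mom(1)[of v] mom(3)[of v] Cm
    proof -
      have i1: "integrable M (\<lambda>\<omega>. (v \<bullet> W \<omega>)^2 - 3 * s * indicator C \<omega>)"
        using mom(1)[of v] intC by auto
      have i2: "integrable M (\<lambda>\<omega>. (v \<bullet> W \<omega>)^4 / (12 * s))"
        using mom(3)[of v] by auto
      have "(\<integral>\<omega>. ?f \<omega> \<partial>M) = (\<integral>\<omega>. (v \<bullet> W \<omega>)^2 - 3 * s * indicator C \<omega> \<partial>M) - (\<integral>\<omega>. (v \<bullet> W \<omega>)^4 / (12 * s) \<partial>M)"
        by (rule Bochner_Integration.integral_diff[OF i1 i2])
      also have "(\<integral>\<omega>. (v \<bullet> W \<omega>)^2 - 3 * s * indicator C \<omega> \<partial>M) = (\<integral>\<omega>. (v \<bullet> W \<omega>)^2 \<partial>M) - (\<integral>\<omega>. 3 * s * indicator C \<omega> \<partial>M)"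
        using mom(1)[of v] intC by (intro Bochner_Integration.integral_diff) auto
      also have "(\<integral>\<omega>. 3 * s * indicator C \<omega> \<partial>M) = 3 * s * measure M C"
        using Cm sets.sets_into_space[OF Cm] by (simp add: Int_absorb2)
      also have "(\<integral>\<omega>. (v \<bullet> W \<omega>)^4 / (12 * s) \<partial>M) = (\<integral>\<omega>. (v \<bullet> W \<omega>)^4 \<partial>M) / (12 * s)"
        by simp
      finally show ?thesis
        by (simp add: mom(2) mom(4) s_def power_mult[symmetric])
    qed
    also have "\<dots> \<ge> s / 2"
    proof -
      have "3 * s^2 / (12 * s) = s / 4" using s by (simp add: power2_eq_square)
      moreover have "s * measure M C \<le> s * (1/12)"
        by (rule mult_left_mono[OF pC]) (use s in simp)
      ultimately show ?thesis by linarith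
    qed
    finally have I1: "s / 2 \<le> (\<integral>\<omega>. ?f \<omega> \<partial>M)" .
    have "(\<integral>\<omega>. ?f \<omega> \<partial>M) \<le> (\<integral>\<omega>. (if W \<omega> \<in> A then (v \<bullet> W \<omega>)^2 else 0) \<partial>M)"
    proof (rule integral_mono[OF intf intA])
      fix \<omega> assume \<omega>: "\<omega> \<in> space M"
      show "?f \<omega> \<le> (if W \<omega> \<in> A then (v \<bullet> W \<omega>)^2 else 0)"
      proof (cases "W \<omega> \<in> A")
        case True
        then show ?thesis using s \<omega> by (simp add: C_def)
      next
        case False
        have "0 \<le> ((v \<bullet> W \<omega>)^2 - 6 * s)^2 / (12 * s)" using s by simp
        then show ?thesis using False s \<omega>
        proof -
          have "indicator C \<omega> = (1::real)" using False \<omega> by (simp add: C_def)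
          moreover have "(v \<bullet> W \<omega>)^4 = ((v \<bullet> W \<omega>)^2)^2" by (simp add: power_mult[symmetric])
          moreover note quad_aux[OF s, of "(v \<bullet> W \<omega>)^2"]
          ultimately show ?thesis using False by simp
        qed
      qed
    qed
    then have "s / 2 \<le> v \<bullet> (S *v v)" using I1 quad[of v] by simp
    then show ?thesis by (simp add: half_id_mult s_def power2_norm_eq_inner)
  qed
  have main: "loewner_le ((1/2 :: real) *\<^sub>R mat 1) S \<and> loewner_le S (mat 1)"
    using loewner_leI[OF symS transpose_half_id lower] loewner_leI[OF transpose_mat symS upper]
    by simp
  show ?thesis using main unfolding Let_def S_def Wb_def .
qed


end
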